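(* Let $l\ge 0$ and $k\ge 1$ be integers, $n=k+l$, $e=2^l$, and $p\in[0,1]$ with $q=1-p$. Let $\mathcal{V}=\{\mathbf{r}=(r_0,\dots,r_n)\in\mathbb{Z}_{\ge 0}^{n+1}: \sum_{j=0}^n r_j=e\}$ (the set of "possible rows"), and for $\mathbf{r}\in\mathcal{V}$ put $\pi(\mathbf{r})=\sum_{j=0}^n r_j\,p^{j}q^{n-j}$ and $f(\mathbf{r})=-\pi(\mathbf{r})\log_2\pi(\mathbf{r})$. Let $V^*(l,k,p)$ be the optimal value of the linear program $$\text{maximize } \sum_{\mathbf{r}\in\mathcal{V}} f(\mathbf{r})\,x_{\mathbf{r}}\quad\text{subject to}\quad \sum_{\mathbf{r}\in\mathcal{V}} r_j\,x_{\mathbf{r}}=\binom{n}{j}\ (j=0,\dots,n),\qquad x_{\mathbf{r}}\ge 0\ (\mathbf{r}\in\mathcal{V}).$$ Then for every binning code $\mathcal{B}_1,\dots,\mathcal{B}_{2^k}$ (a partition of $\{0,1\}^n$ into $2^k$ bins, each of size $2^l$), used over the wiretap channel with noiseless main channel and BSC($p$) wiretap channel as described in the context, the eavesdropper's equivocation satisfies $H(M\mid Z^n)\le V^*(l,k,p)$.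
   Context: Wiretap model: a message $M$ is uniform on $\{1,\dots,2^k\}$; the encoder maps message $i$ to a codeword $X^n$ chosen uniformly at random from bin $\mathcal{B}_i$ (so $X^n$ is uniform on $\{0,1\}^n$). The legitimate receiver observes $X^n$ exactly; the eavesdropper observes $Z^n$, the output of a binary symmetric channel with crossover probability $p$ applied to $X^n$. For an observation $z^n$, $P(x^n\mid z^n)=p^{d_H(x^n,z^n)}q^{n-d_H(x^n,z^n)}$ ($d_H$ = Hamming distance), $P_{\mathcal{B}_i}(z^n)=\sum_{x^n\in\mathcal{B}_i}P(x^n\mid z^n)$, $H(M\mid Z^n=z^n)=-\sum_{i=1}^{2^k}P_{\mathcal{B}_i}(z^n)\log_2 P_{\mathcal{B}_i}(z^n)$, and the (total) equivocation is $H(M\mid Z^n)=2^{-n}\sum_{z^n\in\{0,1\}^n}H(M\mid Z^n=z^n)$. Convention $0\log_2 0=0$. *)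

theory Defs
  imports Complex_Main
begin

definition words :: "nat \<Rightarrow> bool list set" where
  "words n = {xs. length xs = n}"

definition hamming :: "bool list \<Rightarrow> bool list \<Rightarrow> nat" where
  "hamming xs ys = card {i. i < length xs \<and> xs ! i \<noteq> ys ! i}"

definition hterm :: "real \<Rightarrow> real" where
  "hterm t = (if t = 0 then 0 else - t * log 2 t)"

definition binning_code :: "nat \<Rightarrow> nat \<Rightarrow> (nat \<Rightarrow> bool list set) \<Rightarrow> bool" where
  "binning_code l k B \<longleftrightarrow>
     (\<forall>i\<in>{1..2^k}. B i \<subseteq> words (k + l) \<and> card (B i) = 2^l) \<and>
     (\<Union>i\<in>{1..2^k}. B i) = words (k + l) \<and>
     (\<forall>i\<in>{1..2^k}. \<forall>j\<in>{1..2^k}. i \<noteq> j \<longrightarrow> B i \<inter> B j = {})"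

definition post :: "real \<Rightarrow> nat \<Rightarrow> bool list \<Rightarrow> bool list \<Rightarrow> real" where
  "post p n x z = p ^ hamming x z * (1 - p) ^ (n - hamming x z)"

definition bin_prob :: "real \<Rightarrow> nat \<Rightarrow> bool list set \<Rightarrow> bool list \<Rightarrow> real" where
  "bin_prob p n Bi z = (\<Sum>x\<in>Bi. post p n x z)"

definition equivocation :: "nat \<Rightarrow> nat \<Rightarrow> real \<Rightarrow> (nat \<Rightarrow> bool list set) \<Rightarrow> real" where
  "equivocation l k p B =
     (1 / 2 ^ (k + l)) * (\<Sum>z\<in>words (k + l). \<Sum>i\<in>{1..2^k}. hterm (bin_prob p (k + l) (B i) z))"

definition rows :: "nat \<Rightarrow> nat \<Rightarrow> (nat \<Rightarrow> nat) set" where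
  "rows l k = {r. (\<forall>j>k + l. r j = 0) \<and> (\<Sum>j\<le>k + l. r j) = 2 ^ l}"

definition row_pi :: "nat \<Rightarrow> nat \<Rightarrow> real \<Rightarrow> (nat \<Rightarrow> nat) \<Rightarrow> real" where
  "row_pi l k p r = (\<Sum>j\<le>k + l. real (r j) * p ^ j * (1 - p) ^ (k + l - j))"

definition row_f :: "nat \<Rightarrow> nat \<Rightarrow> real \<Rightarrow> (nat \<Rightarrow> nat) \<Rightarrow> real" where
  "row_f l k p r = hterm (row_pi l k p r)"

definition lp_feasible :: "nat \<Rightarrow> nat \<Rightarrow> ((nat \<Rightarrow> nat) \<Rightarrow> real) \<Rightarrow> bool" where
  "lp_feasible l k x \<longleftrightarrow>
     (\<forall>r\<in>rows l k. x r \<ge> 0) \<and>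
     (\<forall>j\<le>k + l. (\<Sum>r\<in>rows l k. real (r j) * x r) = real ((k + l) choose j))"

definition lp_objective :: "nat \<Rightarrow> nat \<Rightarrow> real \<Rightarrow> ((nat \<Rightarrow> nat) \<Rightarrow> real) \<Rightarrow> real" where
  "lp_objective l k p x = (\<Sum>r\<in>rows l k. row_f l k p r * x r)"

definition Vstar :: "nat \<Rightarrow> nat \<Rightarrow> real \<Rightarrow> real" where
  "Vstar l k p = Sup {lp_objective l k p x | x. lp_feasible l k x}"

end

theory Submission
  imports Defs
begin

lemma finite_words: "finite (words n)"
proof -
  have "words n = {xs. set xs \<subseteq> (UNIV::bool set) \<and> length xs = n}"
    unfolding words_def by auto
  then show ?thesis using finite_lists_length_eq[of "UNIV::bool set" n] by simp
qed

lemma card_words: "card (words n) = 2 ^ n"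
proof -
  have "words n = {xs. set xs \<subseteq> (UNIV::bool set) \<and> length xs = n}"
    unfolding words_def by auto
  then show ?thesis using card_lists_length_eq[of "UNIV::bool set" n] by simp
qed

lemma finite_rows: "finite (rows l k)"
proof -
  have "rows l k \<subseteq> {f. \<forall>x. (x \<in> {..k+l} \<longrightarrow> f x \<in> {..2^l}) \<and> (x \<notin> {..k+l} \<longrightarrow> f x = 0)}"
  proof
    fix r assume r: "r \<in> rows l k"
    have "\<forall>x\<le>k+l. r x \<le> 2^l"
    proof (intro allI impI)
      fix x assume "x \<le> k+l"
      then have "r x \<le> (\<Sum>j\<le>k + l. r j)" by (intro member_le_sum) auto
      then show "r x \<le> 2^l" using r unfolding rows_def by simp
    qed
    then show "r \<in> {f. \<forall>x. (x \<in> {..k+l} \<longrightarrow> f x \<in> {..2^l}) \<and> (x \<notin> {..k+l} \<longrightarrow> f x = 0)}"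
      using r unfolding rows_def by auto
  qed
  moreover have "finite {f. \<forall>x. (x \<in> {..k+l} \<longrightarrow> f x \<in> {..(2::nat)^l}) \<and> (x \<notin> {..k+l} \<longrightarrow> f x = 0)}"
    by (rule finite_set_of_finite_funs) auto
  ultimately show ?thesis by (rule finite_subset)
qed

lemma group_card:
  fixes g :: "'b \<Rightarrow> real"
  assumes "finite S" "finite T" "h ` S \<subseteq> T"
  shows "(\<Sum>r\<in>T. g r * real (card {s\<in>S. h s = r})) = (\<Sum>s\<in>S. g (h s))"
proof -
  have "(\<Sum>s\<in>S. g (h s)) = (\<Sum>r\<in>T. \<Sum>s\<in>{s\<in>S. h s = r}. g (h s))"
    using sum.group[OF assms, of "\<lambda>s. g (h s)"] by simp
  also have "\<dots> = (\<Sum>r\<in>T. g r * real (card {s\<in>S. h s = r}))"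
    by (intro sum.cong refl) auto
  finally show ?thesis by simp
qed

lemma hamming_le: "hamming x z \<le> length x"
proof -
  have "{i. i < length x \<and> x ! i \<noteq> z ! i} \<subseteq> {..<length x}" by auto
  then have "card {i. i < length x \<and> x ! i \<noteq> z ! i} \<le> card {..<length x}"
    by (intro card_mono) auto
  then show ?thesis unfolding hamming_def by simp
qed

lemma card_hamming:
  assumes z: "z \<in> words n"
  shows "card {x \<in> words n. hamming x z = j} = n choose j"
proof -
  define f where "f x = {i. i < n \<and> x ! i \<noteq> z ! i}" for x
  have inj: "inj_on f {x \<in> words n. hamming x z = j}"
  proof (rule inj_onI)
    fix x y assume x: "x \<in> {x \<in> words n. hamming x z = j}" and y: "y \<in> {x \<in> words n. hamming x z = j}"
      and e: "f x = f y"
    show "x = y"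
    proof (rule nth_equalityI)
      show "length x = length y" using x y by (simp add: words_def)
      fix i assume "i < length x"
      then have "i < n" using x by (simp add: words_def)
      then have "(x ! i \<noteq> z ! i) = (y ! i \<noteq> z ! i)" using e unfolding f_def by blast
      then show "x ! i = y ! i" by blast
    qed
  qed
  have img: "f ` {x \<in> words n. hamming x z = j} = {S. S \<subseteq> {..<n} \<and> card S = j}"
  proof
    show "f ` {x \<in> words n. hamming x z = j} \<subseteq> {S. S \<subseteq> {..<n} \<and> card S = j}"
      by (auto simp: f_def hamming_def words_def)
    show "{S. S \<subseteq> {..<n} \<and> card S = j} \<subseteq> f ` {x \<in> words n. hamming x z = j}"
    proof
      fix S assume S: "S \<in> {S. S \<subseteq> {..<n} \<and> card S = j}"
      define x where "x = map (\<lambda>i. (i \<in> S) \<noteq> z ! i) [0..<n]"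
      have fx: "f x = S" using S unfolding f_def x_def by auto
      have "hamming x z = card (f x)" unfolding hamming_def f_def x_def by simp
      then have "x \<in> {x \<in> words n. hamming x z = j}" using fx S by (simp add: words_def x_def)
      then show "S \<in> f ` {x \<in> words n. hamming x z = j}" using fx by blast
    qed
  qed
  have "card {x \<in> words n. hamming x z = j} = card {S. S \<subseteq> {..<n} \<and> card S = j}"
    using card_image[OF inj] img by simp
  also have "\<dots> = n choose j" using n_subsets[of "{..<n}" j] by simp
  finally show ?thesis .
qed

lemma sum_prod_swap: "(\<Sum>s\<in>A \<times> B. g s) = (\<Sum>b\<in>B. \<Sum>a\<in>A. g (a, b))"
proof -
  have "(\<Sum>s\<in>A \<times> B. g s) = (\<Sum>a\<in>A. \<Sum>b\<in>B. g (a, b))"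
    by (simp add: sum.cartesian_product)
  also have "\<dots> = (\<Sum>b\<in>B. \<Sum>a\<in>A. g (a, b))" by (rule sum.swap)
  finally show ?thesis .
qed

theorem lemma1:
  fixes l k :: nat and p :: real and B :: "nat \<Rightarrow> bool list set"
  assumes "k \<ge> 1" and "0 \<le> p" and "p \<le> 1"
    and "binning_code l k B"
  shows "equivocation l k p B \<le> Vstar l k p"
proof -
  define n where "n = k + l"
  define I where "I = {1..(2::nat)^k}"
  define W where "W = words n"
  define R where "R = (\<lambda>(i::nat, z::bool list) (j::nat). card {x \<in> B i. hamming x z = j})"
  define X where "X = (\<lambda>r. (1 / 2 ^ n) * real (card {s \<in> I \<times> W. R s = r}))"
  have bc: "\<And>i. i \<in> I \<Longrightarrow> B i \<subseteq> W \<and> card (B i) = 2^l"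
    "(\<Union>i\<in>I. B i) = W" "\<And>i j. i \<in> I \<Longrightarrow> j \<in> I \<Longrightarrow> i \<noteq> j \<Longrightarrow> B i \<inter> B j = {}"
    using assms(4) unfolding binning_code_def I_def W_def n_def by auto
  have fW: "finite W" unfolding W_def by (rule finite_words)
  have fB: "\<And>i. i \<in> I \<Longrightarrow> finite (B i)" using bc(1) fW finite_subset by blast
  have fS: "finite (I \<times> W)" using fW unfolding I_def by simp
  have lenB: "\<And>i x. i \<in> I \<Longrightarrow> x \<in> B i \<Longrightarrow> length x = n"
    using bc(1) unfolding W_def words_def by auto
  have Rrow: "R s \<in> rows l k" if s: "s \<in> I \<times> W" for s
  proof -
    obtain i z where iz: "s = (i, z)" "i \<in> I" "z \<in> W" using s by auto
    have zero: "\<forall>j>k + l. R s j = 0"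
    proof (intro allI impI)
      fix j assume "j > k + l"
      then have "{x \<in> B i. hamming x z = j} = {}"
      proof -
        have "\<forall>x\<in>B i. hamming x z \<le> k + l" using hamming_le lenB[OF iz(2)] unfolding n_def by metis
        then show ?thesis using \<open>j > k + l\<close> by fastforce
      qed
      then have e: "{x \<in> B i. hamming x z = j} = {}" .
      have "R s j = card {x \<in> B i. hamming x z = j}" unfolding R_def iz by simp
      also have "\<dots> = 0" by (simp only: e card.empty)
      finally show "R s j = 0" .
    qed
    have "(\<Sum>j\<le>k + l. R s j) = (\<Sum>j\<in>{..n}. card {x \<in> B i. hamming x z = j})"
      unfolding R_def iz n_def by simp
    also have "\<dots> = card (B i)"
    proof -
      have "(\<Sum>j\<in>{..n}. card {x \<in> B i. hamming x z = j}) = (\<Sum>j\<in>{..n}. \<Sum>x\<in>{x \<in> B i. hamming x z = j}. 1)"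
        by simp
      also have "\<dots> = (\<Sum>x\<in>B i. (1::nat))"
        by (rule sum.group) (use fB[OF iz(2)] hamming_le lenB[OF iz(2)] in auto)
      finally show ?thesis by simp
    qed
    also have "\<dots> = 2^l" using bc(1)[OF iz(2)] by simp
    finally show ?thesis using zero unfolding rows_def by simp
  qed
  have Rimg: "R ` (I \<times> W) \<subseteq> rows l k" using Rrow by blast
  have fR: "finite (rows l k)" by (rule finite_rows)
  have key: "(\<Sum>r\<in>rows l k. g r * X r) = (1 / 2 ^ n) * (\<Sum>s\<in>I \<times> W. g (R s))" for g
  proof -
    have "(\<Sum>r\<in>rows l k. g r * X r) = (1 / 2 ^ n) * (\<Sum>r\<in>rows l k. g r * real (card {s \<in> I \<times> W. R s = r}))"
      unfolding X_def by (simp add: sum_distrib_left mult_ac)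
    also have "\<dots> = (1 / 2 ^ n) * (\<Sum>s\<in>I \<times> W. g (R s))"
      using group_card[OF fS fR Rimg, of g] by simp
    finally show ?thesis .
  qed
  have feas: "lp_feasible l k X"
    unfolding lp_feasible_def
  proof (intro conjI ballI allI impI)
    fix r show "0 \<le> X r" unfolding X_def by simp
  next
    fix j assume j: "j \<le> k + l"
    have "(\<Sum>r\<in>rows l k. real (r j) * X r) = (1 / 2 ^ n) * (\<Sum>s\<in>I \<times> W. real (R s j))"
      using key[of "\<lambda>r. real (r j)"] by simp
    also have "(\<Sum>s\<in>I \<times> W. real (R s j)) = (\<Sum>z\<in>W. \<Sum>i\<in>I. real (R (i, z) j))"
      by (rule sum_prod_swap)
    also have "\<dots> = (\<Sum>z\<in>W. real (n choose j))"
    proof (rule sum.cong[OF refl])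
      fix z assume z: "z \<in> W"
      have "(\<Sum>i\<in>I. R (i, z) j) = card (\<Union>i\<in>I. {x \<in> B i. hamming x z = j})"
      proof -
        have d: "\<forall>i\<in>I. \<forall>i'\<in>I. i \<noteq> i' \<longrightarrow> {x \<in> B i. hamming x z = j} \<inter> {x \<in> B i'. hamming x z = j} = {}"
          using bc(3) by blast
        have f: "\<forall>i\<in>I. finite {x \<in> B i. hamming x z = j}" using fB by simp
        have fI: "finite I" unfolding I_def by simp
        show ?thesis unfolding R_def using card_UN_disjoint[OF fI f d] by simp
      qed
      also have "(\<Union>i\<in>I. {x \<in> B i. hamming x z = j}) = {x \<in> words n. hamming x z = j}"
        using bc(2) unfolding W_def by blast
      also have "card \<dots> = n choose j" using card_hamming z unfolding W_def by simp
      finally have h: "(\<Sum>i\<in>I. R (i, z) j) = n choose j" .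
      show "(\<Sum>i\<in>I. real (R (i, z) j)) = real (n choose j)"
        by (simp add: h flip: of_nat_sum)
    qed
    also have "\<dots> = 2 ^ n * real (n choose j)" using card_words unfolding W_def by simp
    finally show "(\<Sum>r\<in>rows l k. real (r j) * X r) = real ((k + l) choose j)"
      unfolding n_def by simp
  qed
  have obj: "lp_objective l k p X = equivocation l k p B"
  proof -
    have binp: "bin_prob p n (B i) z = row_pi l k p (R (i, z))" if "i \<in> I" for i z
    proof -
      have "bin_prob p n (B i) z = (\<Sum>x\<in>B i. p ^ hamming x z * (1 - p) ^ (n - hamming x z))"
        unfolding bin_prob_def post_def by simp
      also have "\<dots> = (\<Sum>j\<in>{..n}. \<Sum>x\<in>{x \<in> B i. hamming x z = j}. p ^ hamming x z * (1 - p) ^ (n - hamming x z))"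
        by (rule sum.group[symmetric]) (use fB[OF that] hamming_le lenB[OF that] in auto)
      also have "\<dots> = (\<Sum>j\<in>{..n}. real (card {x \<in> B i. hamming x z = j}) * p ^ j * (1 - p) ^ (n - j))"
        by (intro sum.cong refl) auto
      finally show ?thesis unfolding row_pi_def R_def n_def by simp
    qed
    have "lp_objective l k p X = (1 / 2 ^ n) * (\<Sum>s\<in>I \<times> W. row_f l k p (R s))"
      unfolding lp_objective_def by (rule key)
    also have "(\<Sum>s\<in>I \<times> W. row_f l k p (R s)) = (\<Sum>z\<in>W. \<Sum>i\<in>I. row_f l k p (R (i, z)))"
      by (rule sum_prod_swap)
    also have "\<dots> = (\<Sum>z\<in>W. \<Sum>i\<in>I. hterm (bin_prob p n (B i) z))"
      by (intro sum.cong refl) (simp add: row_f_def binp)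
    finally show ?thesis unfolding equivocation_def n_def I_def W_def by simp
  qed
  have bdd: "bdd_above {lp_objective l k p x | x. lp_feasible l k x}"
  proof (rule bdd_aboveI)
    fix v assume "v \<in> {lp_objective l k p x | x. lp_feasible l k x}"
    then obtain y where v: "v = lp_objective l k p y" and fy: "lp_feasible l k y" by blast
    have y0: "\<And>r. r \<in> rows l k \<Longrightarrow> y r \<ge> 0" using fy unfolding lp_feasible_def by blast
    have "(\<Sum>r\<in>rows l k. y r * 2 ^ l) = (\<Sum>r\<in>rows l k. y r * (\<Sum>j\<le>k+l. real (r j)))"
      by (intro sum.cong refl) (simp add: rows_def flip: of_nat_sum)
    also have "\<dots> = (\<Sum>j\<le>k+l. \<Sum>r\<in>rows l k. real (r j) * y r)"
      by (simp only: sum_distrib_left mult.commute) (rule sum.swap)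
    also have "\<dots> = (\<Sum>j\<le>k+l. real ((k+l) choose j))"
      using fy unfolding lp_feasible_def by (intro sum.cong refl) auto
    also have "\<dots> = 2 ^ (k+l)" by (simp add: choose_row_sum flip: of_nat_sum)
    finally have "(\<Sum>r\<in>rows l k. y r) * 2 ^ l = 2 ^ k * 2 ^ l"
      by (simp add: sum_distrib_right power_add)
    then have sy: "(\<Sum>r\<in>rows l k. y r) = 2 ^ k" by simp
    have yle: "y r \<le> 2 ^ k" if "r \<in> rows l k" for r
      using member_le_sum[of r "rows l k" y] that y0 fR sy by simp
    have "v \<le> (\<Sum>r\<in>rows l k. \<bar>row_f l k p r\<bar> * 2 ^ k)"
      unfolding v lp_objective_def
    proof (rule sum_mono)
      fix r assume r: "r \<in> rows l k"
      have "row_f l k p r * y r \<le> \<bar>row_f l k p r\<bar> * y r" using y0[OF r] by (simp add: mult_right_mono)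
      also have "\<dots> \<le> \<bar>row_f l k p r\<bar> * 2 ^ k" using yle[OF r] by (simp add: mult_left_mono)
      finally show "row_f l k p r * y r \<le> \<bar>row_f l k p r\<bar> * 2 ^ k" .
    qed
    then show "v \<le> (\<Sum>r\<in>rows l k. \<bar>row_f l k p r\<bar> * 2 ^ k)" .
  qed
  have "lp_objective l k p X \<le> Vstar l k p"
    unfolding Vstar_def by (rule cSup_upper) (use feas bdd in auto)
  then show ?thesis using obj by simp
qed

end
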